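(* Let $T$ be a countable tree with at least one vertex of infinite degree, and let $H$ be a countable graph in which every vertex has infinite degree. Then for every $v\in V(H)$, $H$ contains a subgraph isomorphic to $T$ whose vertex set contains $N_H(v)$.
   Context: $N_H(v)$ denotes the set of neighbors of $v$ in $H$. *)

theory Defs
  imports Main "HOL-Library.Countable_Set"
begin

definition graph :: "'a set \<Rightarrow> ('a \<Rightarrow> 'a \<Rightarrow> bool) \<Rightarrow> bool" where
  "graph V E \<longleftrightarrow> (\<forall>x y. E x y \<longrightarrow> x \<in> V \<and> y \<in> V \<and> x \<noteq> y \<and> E y x)"

definition neighbors :: "'a set \<Rightarrow> ('a \<Rightarrow> 'a \<Rightarrow> bool) \<Rightarrow> 'a \<Rightarrow> 'a set" where
  "neighbors V E v = {u \<in> V. E v u}"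

definition infinite_degree :: "'a set \<Rightarrow> ('a \<Rightarrow> 'a \<Rightarrow> bool) \<Rightarrow> 'a \<Rightarrow> bool" where
  "infinite_degree V E v \<longleftrightarrow> infinite (neighbors V E v)"

definition connected_graph :: "'a set \<Rightarrow> ('a \<Rightarrow> 'a \<Rightarrow> bool) \<Rightarrow> bool" where
  "connected_graph V E \<longleftrightarrow> V \<noteq> {} \<and> (\<forall>x\<in>V. \<forall>y\<in>V. E\<^sup>*\<^sup>* x y)"

definition is_cycle :: "('a \<Rightarrow> 'a \<Rightarrow> bool) \<Rightarrow> 'a list \<Rightarrow> bool" where
  "is_cycle E cs \<longleftrightarrow> length cs \<ge> 3 \<and> distinct cs \<and>
     (\<forall>i. Suc i < length cs \<longrightarrow> E (cs ! i) (cs ! Suc i)) \<and> E (last cs) (hd cs)"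

definition tree :: "'a set \<Rightarrow> ('a \<Rightarrow> 'a \<Rightarrow> bool) \<Rightarrow> bool" where
  "tree V E \<longleftrightarrow> graph V E \<and> connected_graph V E \<and> (\<nexists>cs. is_cycle E cs)"

text \<open>H = (VH, EH) contains a subgraph isomorphic to T = (VT, ET) whose vertex set
is f ` VT: f is injective on VT and maps edges to edges.\<close>
definition subgraph_embedding ::
  "'b set \<Rightarrow> ('b \<Rightarrow> 'b \<Rightarrow> bool) \<Rightarrow> 'a set \<Rightarrow> ('a \<Rightarrow> 'a \<Rightarrow> bool) \<Rightarrow> ('b \<Rightarrow> 'a) \<Rightarrow> bool" where
  "subgraph_embedding VT ET VH EH f \<longleftrightarrow> inj_on f VT \<and> f ` VT \<subseteq> VH \<and>
     (\<forall>x\<in>VT. \<forall>y\<in>VT. ET x y \<longrightarrow> EH (f x) (f y))"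

end

theory Submission imports Defs begin

lemma rtranclp_distinct_path:
  assumes "P\<^sup>*\<^sup>* a b"
  shows "\<exists>xs. xs \<noteq> [] \<and> hd xs = a \<and> last xs = b \<and> distinct xs \<and>
           (\<forall>i. Suc i < length xs \<longrightarrow> P (xs!i) (xs!Suc i))"
  using assms
proof (induction rule: rtranclp_induct)
  case base
  then show ?case by (intro exI[of _ "[a]"]) auto
next
  case (step c b)
  then obtain xs where xs: "xs \<noteq> []" "hd xs = a" "last xs = c" "distinct xs"
    "\<forall>i. Suc i < length xs \<longrightarrow> P (xs!i) (xs!Suc i)" by blast
  show ?case
  proof (cases "b \<in> set xs")
    case True
    then obtain j where j: "j < length xs" "xs!j = b" by (auto simp: in_set_conv_nth)
    let ?ys = "take (Suc j) xs"
    have "?ys \<noteq> []" using xs(1) by simp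
    moreover have "hd ?ys = a" using xs(1,2) by (simp add: hd_conv_nth)
    moreover have "last ?ys = b" using j by (simp add: last_conv_nth min_def take_Suc_conv_app_nth)
    moreover have "distinct ?ys" using xs(4) by simp
    moreover have "\<forall>i. Suc i < length ?ys \<longrightarrow> P (?ys!i) (?ys!Suc i)"
      using xs(5) j by auto
    ultimately show ?thesis by blast
  next
    case False
    let ?ys = "xs @ [b]"
    have "\<forall>i. Suc i < length ?ys \<longrightarrow> P (?ys!i) (?ys!Suc i)"
    proof (intro allI impI)
      fix i assume i: "Suc i < length ?ys"
      show "P (?ys!i) (?ys!Suc i)"
      proof (cases "Suc i < length xs")
        case True then show ?thesis using xs(5) by (simp add: nth_append)
      next
        case False
        then have "i = length xs - 1" "Suc i = length xs" using i by auto
        then show ?thesis using xs(1,3) step(2) by (simp add: nth_append last_conv_nth)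
      qed
    qed
    then show ?thesis using xs False by (intro exI[of _ ?ys]) auto
  qed
qed

lemma tree_unique_nb:
  assumes "tree V E" "x \<notin> S" "(\<lambda>a b. a\<in>S \<and> b\<in>S \<and> E a b)\<^sup>*\<^sup>* a b" "E x a" "E x b"
  shows "a = b"
proof (rule ccontr)
  assume ab: "a \<noteq> b"
  let ?Q = "\<lambda>a b. a\<in>S \<and> b\<in>S \<and> E a b"
  obtain xs where xs: "xs \<noteq> []" "hd xs = a" "last xs = b" "distinct xs"
    "\<forall>i. Suc i < length xs \<longrightarrow> ?Q (xs!i) (xs!Suc i)"
    using rtranclp_distinct_path[OF assms(3)] by blast
  have len: "length xs \<ge> 2"
  proof (rule ccontr)
    assume "\<not> length xs \<ge> 2"
    with xs(1) have "length xs = 1" by (cases xs) (auto simp: Suc_le_eq)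
    then have "hd xs = last xs" by (cases xs) auto
    with xs ab show False by simp
  qed
  have sub: "set xs \<subseteq> S"
  proof
    fix z assume "z \<in> set xs"
    then obtain j where j: "j < length xs" "xs!j = z" by (auto simp: in_set_conv_nth)
    show "z \<in> S"
    proof (cases "Suc j < length xs")
      case True then show ?thesis using xs(5) j by blast
    next
      case False
      then have "j = Suc (j - 1)" "Suc (j-1) < length xs" using j len by auto
      then show ?thesis using xs(5)[rule_format, of "j-1"] j by simp
    qed
  qed
  have gr: "graph V E" using assms(1) by (simp add: tree_def)
  let ?cs = "x # xs"
  have "is_cycle E ?cs"
    unfolding is_cycle_def
  proof (intro conjI allI impI)
    show "3 \<le> length ?cs" using len by simp
    show "distinct ?cs" using xs(4) sub assms(2) by auto
    show "E (last ?cs) (hd ?cs)" using xs(1,3) assms(5) gr by (simp add: graph_def)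
  next
    fix i assume i: "Suc i < length ?cs"
    show "E (?cs!i) (?cs!Suc i)"
    proof (cases i)
      case 0 then show ?thesis using xs(1,2) assms(4) by (simp add: hd_conv_nth)
    next
      case (Suc k) then show ?thesis using xs(5) i by auto
    qed
  qed
  then show False using assms(1) by (auto simp: tree_def)
qed


lemma sym_rtranclp:
  assumes "R\<^sup>*\<^sup>* a b" "\<And>x y. R x y \<Longrightarrow> R y x" shows "R\<^sup>*\<^sup>* b a"
  using assms(1)
proof (induction rule: rtranclp_induct)
  case base then show ?case by simp
next
  case (step c d) then show ?case
    using assms(2) by (meson converse_rtranclp_into_rtranclp)
qed

locale emb =
  fixes VT :: "'b set" and ET :: "'b \<Rightarrow> 'b \<Rightarrow> bool"
    and VH :: "'a set" and EH :: "'a \<Rightarrow> 'a \<Rightarrow> bool" and v :: 'a and t :: 'b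
  assumes tr: "tree VT ET" and cT: "countable VT" and tV: "t \<in> VT"
    and tinf: "infinite_degree VT ET t" and gH: "graph VH EH"
    and infH: "\<forall>w\<in>VH. infinite_degree VH EH w" and vV: "v \<in> VH" and cH: "countable VH"
begin

definition Q :: "'b set \<Rightarrow> 'b \<Rightarrow> 'b \<Rightarrow> bool" where
  "Q S a b \<longleftrightarrow> a\<in>S \<and> b\<in>S \<and> ET a b"

definition good :: "'b set \<Rightarrow> ('b \<Rightarrow> 'a) \<Rightarrow> bool" where
  "good S f \<longleftrightarrow> finite S \<and> t \<in> S \<and> S \<subseteq> VT \<and> inj_on f S \<and> f ` S \<subseteq> VH \<and>
     (\<forall>a\<in>S. \<forall>b\<in>S. ET a b \<longrightarrow> EH (f a) (f b)) \<and> (\<forall>a\<in>S. (Q S)\<^sup>*\<^sup>* t a) \<and> f t = v"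

lemma gT: "graph VT ET" using tr by (simp add: tree_def)

lemma uniq:
  assumes "good S f" "x \<notin> S" "a \<in> S" "b \<in> S" "ET x a" "ET x b"
  shows "a = b"
proof -
  have "(Q S)\<^sup>*\<^sup>* t a" "(Q S)\<^sup>*\<^sup>* t b" using assms by (auto simp: good_def)
  moreover have "\<And>x y. Q S x y \<Longrightarrow> Q S y x" using gT by (auto simp: Q_def graph_def)
  ultimately have "(Q S)\<^sup>*\<^sup>* a b" using sym_rtranclp by (metis rtranclp_trans)
  then have "(\<lambda>a b. a\<in>S \<and> b\<in>S \<and> ET a b)\<^sup>*\<^sup>* a b" by (simp add: Q_def[abs_def])
  then show ?thesis using tree_unique_nb[OF tr assms(2) _ assms(5,6)] by blast
qed

lemma add_good:
  assumes g: "good S f" and x: "x \<in> VT" "x \<notin> S" and p: "p \<in> S" "ET p x"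
    and y: "y \<in> VH" "EH (f p) y" "y \<notin> f ` S"
  shows "good (insert x S) (f(x:=y))"
proof -
  have fS: "\<forall>a\<in>S. (f(x:=y)) a = f a" using x by auto
  have edges: "\<forall>a\<in>insert x S. \<forall>b\<in>insert x S. ET a b \<longrightarrow> EH ((f(x:=y)) a) ((f(x:=y)) b)"
  proof (intro ballI impI)
    fix a b assume a: "a \<in> insert x S" and b: "b \<in> insert x S" and e: "ET a b"
    show "EH ((f(x:=y)) a) ((f(x:=y)) b)"
    proof (cases "a = x")
      case True
      then have "b \<noteq> x" using e gT by (auto simp: graph_def)
      then have "b \<in> S" using b by auto
      have "ET x p" using p gT by (auto simp: graph_def)
      then have "b = p" using uniq[OF g x(2) p(1) \<open>b\<in>S\<close>] e True by auto
      then show ?thesis using True \<open>b \<noteq> x\<close> y(2) gH by (auto simp: graph_def)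
    next
      case False
      then have "a \<in> S" using a by auto
      show ?thesis
      proof (cases "b = x")
        case True
        have "ET x a" using e True gT by (auto simp: graph_def)
        have "ET x p" using p gT by (auto simp: graph_def)
        then have "a = p" using uniq[OF g x(2) p(1) \<open>a\<in>S\<close>] \<open>ET x a\<close> by auto
        then show ?thesis using True False y(2) by auto
      next
        case False2: False
        then have "b \<in> S" using b by auto
        then show ?thesis using g \<open>a\<in>S\<close> e False False2 by (auto simp: good_def)
      qed
    qed
  qed
  have conn: "\<forall>a\<in>insert x S. (Q (insert x S))\<^sup>*\<^sup>* t a"
  proof
    fix a assume a: "a \<in> insert x S"
    have mono: "\<And>c. (Q S)\<^sup>*\<^sup>* t c \<Longrightarrow> (Q (insert x S))\<^sup>*\<^sup>* t c"
      by (rule rtranclp_mono[THEN predicate2D]) (auto simp: Q_def)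
    show "(Q (insert x S))\<^sup>*\<^sup>* t a"
    proof (cases "a = x")
      case True
      have "(Q (insert x S))\<^sup>*\<^sup>* t p" using mono g p by (auto simp: good_def)
      moreover have "Q (insert x S) p x" using p by (auto simp: Q_def)
      ultimately show ?thesis using True by (meson rtranclp.rtrancl_into_rtrancl)
    next
      case False then show ?thesis using mono g a by (auto simp: good_def)
    qed
  qed
  have "inj_on (f(x:=y)) (insert x S)"
    using g y(3) x(2) by (auto simp: good_def inj_on_def)
  moreover have "(f(x:=y)) ` insert x S \<subseteq> VH" using g y(1) x(2) by (auto simp: good_def)
  ultimately show ?thesis using g edges conn x y(1) by (auto simp: good_def)
qed

definition NV where "NV = neighbors VH EH v"

lemma NV_inf: "infinite NV" using infH vV by (auto simp: NV_def infinite_degree_def)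

definition coverA :: "nat \<Rightarrow> 'b set \<Rightarrow> ('b \<Rightarrow> 'a) \<Rightarrow> 'b set \<times> ('b \<Rightarrow> 'a)" where
  "coverA n S f = (let u = from_nat_into NV n in if u \<in> f ` S then (S, f) else
     (let x = SOME x. x \<in> neighbors VT ET t \<and> x \<notin> S in (insert x S, f(x:=u))))"

lemma coverA:
  assumes g: "good S f"
  shows "good (fst (coverA n S f)) (snd (coverA n S f)) \<and> S \<subseteq> fst (coverA n S f) \<and>
     (\<forall>a\<in>S. snd (coverA n S f) a = f a) \<and>
     from_nat_into NV n \<in> snd (coverA n S f) ` fst (coverA n S f)"
proof (cases "from_nat_into NV n \<in> f ` S")
  case True then show ?thesis using g by (simp add: coverA_def)
next
  case False
  let ?u = "from_nat_into NV n"
  have "infinite (neighbors VT ET t - S)" using tinf g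
    by (auto simp: infinite_degree_def good_def)
  then have "\<exists>x. x \<in> neighbors VT ET t \<and> x \<notin> S" using infinite_imp_nonempty by blast
  then obtain x where x: "x = (SOME x. x \<in> neighbors VT ET t \<and> x \<notin> S)"
    "x \<in> neighbors VT ET t" "x \<notin> S" by (metis (mono_tags, lifting) someI_ex)
  have u: "?u \<in> NV" using NV_inf by (metis finite.emptyI from_nat_into)
  have ft: "f t = v" "t \<in> S" using g by (auto simp: good_def)
  have "good (insert x S) (f(x:=?u))"
    apply (rule add_good[OF g _ x(3) ft(2)])
    using x(2) u ft False by (auto simp: neighbors_def NV_def)
  then show ?thesis using False x by (auto simp: coverA_def Let_def)
qed

definition C :: "'b set \<Rightarrow> 'b set" where
  "C S = {y\<in>VT. y \<notin> S \<and> (\<exists>a\<in>S. ET a y)}"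

definition growB :: "'b set \<Rightarrow> ('b \<Rightarrow> 'a) \<Rightarrow> 'b set \<times> ('b \<Rightarrow> 'a)" where
  "growB S f = (if C S = {} then (S, f) else
     (let y = SOME y. y \<in> C S \<and> (\<forall>y'\<in>C S. to_nat_on VT y \<le> to_nat_on VT y');
          p = SOME p. p \<in> S \<and> ET p y;
          z = SOME z. z \<in> neighbors VH EH (f p) \<and> z \<notin> f ` S
      in (insert y S, f(y:=z))))"

lemma growB:
  assumes g: "good S f"
  shows "good (fst (growB S f)) (snd (growB S f)) \<and> S \<subseteq> fst (growB S f) \<and>
     (\<forall>a\<in>S. snd (growB S f) a = f a) \<and>
     (\<forall>x\<in>C S. \<exists>y\<in>C S. fst (growB S f) = insert y S \<and> to_nat_on VT y \<le> to_nat_on VT x)"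
proof (cases "C S = {}")
  case True then show ?thesis using g by (simp add: growB_def)
next
  case False
  then obtain x0 where "x0 \<in> C S" by auto
  then have "\<exists>y. y \<in> C S \<and> (\<forall>y'. y' \<in> C S \<longrightarrow> to_nat_on VT y \<le> to_nat_on VT y')"
    by (rule ex_has_least_nat)
  then have "\<exists>y. y \<in> C S \<and> (\<forall>y'\<in>C S. to_nat_on VT y \<le> to_nat_on VT y')" by blast
  then have "(SOME y. y \<in> C S \<and> (\<forall>y'\<in>C S. to_nat_on VT y \<le> to_nat_on VT y')) \<in> C S \<and>
     (\<forall>y'\<in>C S. to_nat_on VT (SOME y. y \<in> C S \<and> (\<forall>y'\<in>C S. to_nat_on VT y \<le> to_nat_on VT y')) \<le> to_nat_on VT y')"
    by (rule someI_ex)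
  then obtain y where y: "y = (SOME y. y \<in> C S \<and> (\<forall>y'\<in>C S. to_nat_on VT y \<le> to_nat_on VT y'))"
    "y \<in> C S" "\<forall>y'\<in>C S. to_nat_on VT y \<le> to_nat_on VT y'"
    by blast
  have "\<exists>p. p \<in> S \<and> ET p y" using y(2) by (auto simp: C_def)
  then obtain p where p: "p = (SOME p. p \<in> S \<and> ET p y)" "p \<in> S" "ET p y"
    by (metis (mono_tags, lifting) someI_ex)
  have "f p \<in> VH" using g p by (auto simp: good_def)
  then have "infinite (neighbors VH EH (f p) - f ` S)" using infH g
    by (auto simp: infinite_degree_def good_def)
  then have "\<exists>z. z \<in> neighbors VH EH (f p) \<and> z \<notin> f ` S" using infinite_imp_nonempty by blast
  then obtain z where z: "z = (SOME z. z \<in> neighbors VH EH (f p) \<and> z \<notin> f ` S)"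
    "z \<in> neighbors VH EH (f p)" "z \<notin> f ` S" by (metis (mono_tags, lifting) someI_ex)
  have yy: "y \<in> VT" "y \<notin> S" using y(2) by (auto simp: C_def)
  have "good (insert y S) (f(y:=z))"
    apply (rule add_good[OF g yy p(2,3)])
    using z by (auto simp: neighbors_def)
  moreover have "growB S f = (insert y S, f(y:=z))"
    using False y(1) p(1) z(1) by (simp add: growB_def Let_def)
  ultimately show ?thesis using yy y by auto
qed

end


context emb begin

primrec st :: "nat \<Rightarrow> 'b set \<times> ('b \<Rightarrow> 'a)" where
  "st 0 = ({t}, \<lambda>_. v)"
| "st (Suc n) = growB (fst (coverA n (fst (st n)) (snd (st n))))
                      (snd (coverA n (fst (st n)) (snd (st n))))"

abbreviation "SS n \<equiv> fst (st n)"
abbreviation "ff n \<equiv> snd (st n)"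
abbreviation "TT n \<equiv> fst (coverA n (SS n) (ff n))"
abbreviation "gg n \<equiv> snd (coverA n (SS n) (ff n))"

lemma good_st: "good (SS n) (ff n)"
proof (induction n)
  case 0
  have "\<not> ET t t" using gT by (auto simp: graph_def)
  then show ?case using tV vV by (auto simp: good_def)
next
  case (Suc n)
  then show ?case using coverA growB by simp
qed

lemma stepfacts: "SS n \<subseteq> TT n \<and> TT n \<subseteq> SS (Suc n) \<and> (\<forall>a\<in>SS n. gg n a = ff n a)
   \<and> (\<forall>a\<in>TT n. ff (Suc n) a = gg n a) \<and> good (TT n) (gg n)
   \<and> from_nat_into NV n \<in> gg n ` TT n
   \<and> (\<forall>x\<in>C (TT n). \<exists>y\<in>C (TT n). SS (Suc n) = insert y (TT n) \<and> to_nat_on VT y \<le> to_nat_on VT x)"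
proof -
  have c: "good (TT n) (gg n)" "SS n \<subseteq> TT n" "\<forall>a\<in>SS n. gg n a = ff n a"
    "from_nat_into NV n \<in> gg n ` TT n"
    using coverA[where n=n, OF good_st[of n]] by blast+
  have "good (fst (growB (TT n) (gg n))) (snd (growB (TT n) (gg n))) \<and> TT n \<subseteq> fst (growB (TT n) (gg n)) \<and>
     (\<forall>a\<in>TT n. snd (growB (TT n) (gg n)) a = gg n a) \<and>
     (\<forall>x\<in>C (TT n). \<exists>y\<in>C (TT n). fst (growB (TT n) (gg n)) = insert y (TT n) \<and> to_nat_on VT y \<le> to_nat_on VT x)"
    by (rule growB[OF c(1)])
  then have g: "TT n \<subseteq> SS (Suc n)" "\<forall>a\<in>TT n. ff (Suc n) a = gg n a"
     "\<forall>x\<in>C (TT n). \<exists>y\<in>C (TT n). SS (Suc n) = insert y (TT n) \<and> to_nat_on VT y \<le> to_nat_on VT x"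
    unfolding st.simps(2) by blast+
  show ?thesis using c g by blast
qed

lemma sf1: "SS n \<subseteq> SS (Suc n)"
proof -
  have "SS n \<subseteq> TT n" "TT n \<subseteq> SS (Suc n)" using stepfacts[of n] by blast+
  then show ?thesis by (rule subset_trans)
qed

lemma sf2: "a \<in> SS n \<Longrightarrow> ff (Suc n) a = ff n a"
proof -
  assume a: "a \<in> SS n"
  have h: "SS n \<subseteq> TT n" "\<forall>a\<in>SS n. gg n a = ff n a" "\<forall>a\<in>TT n. ff (Suc n) a = gg n a"
    using stepfacts[of n] by blast+
  from a h(1) have "a \<in> TT n" by blast
  then show ?thesis using h(2,3) a by simp
qed

lemma sf3: "SS n \<subseteq> TT n" using stepfacts[of n] by blast
lemma sf4: "TT n \<subseteq> SS (Suc n)" using stepfacts[of n] by blast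
lemma sf5: "\<forall>x\<in>C (TT n). \<exists>y\<in>C (TT n). SS (Suc n) = insert y (TT n) \<and> to_nat_on VT y \<le> to_nat_on VT x"
  using stepfacts[of n] by blast
lemma sf6: "from_nat_into NV n \<in> gg n ` TT n" using stepfacts[of n] by blast
lemma sf7: "a \<in> TT n \<Longrightarrow> ff (Suc n) a = gg n a" using stepfacts[of n] by blast

lemma mono_st: "m \<le> n \<Longrightarrow> SS m \<subseteq> SS n \<and> (\<forall>a\<in>SS m. ff n a = ff m a)"
proof (induction n)
  case 0 then show ?case by simp
next
  case (Suc n)
  show ?case
  proof (cases "m = Suc n")
    case True then show ?thesis by simp
  next
    case False
    then have "m \<le> n" using Suc by simp
    then have "SS m \<subseteq> SS n" "\<forall>a\<in>SS m. ff n a = ff m a" using Suc.IH by simp_all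
    then show ?thesis using sf1[of n] sf2[of _ n] by auto
  qed
qed

lemma reach: assumes "x \<in> VT" shows "\<exists>n. x \<in> SS n"
proof -
  have "ET\<^sup>*\<^sup>* t x" using tr assms tV by (auto simp: tree_def connected_graph_def)
  then show ?thesis
  proof (induction rule: rtranclp_induct)
    case base have "t \<in> SS 0" by simp then show ?case by blast
  next
    case (step a x)
    then obtain m where am: "a \<in> SS m" by blast
    have xV: "x \<in> VT" using step(2) gT by (auto simp: graph_def)
    show ?case
    proof (rule ccontr)
      assume nx: "\<not> (\<exists>n. x \<in> SS n)"
      have "\<forall>k. \<exists>y. k \<ge> m \<longrightarrow> (y \<in> C (TT k) \<and> SS (Suc k) = insert y (TT k) \<and> to_nat_on VT y \<le> to_nat_on VT x)"
      proof
        fix k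
        show "\<exists>y. k \<ge> m \<longrightarrow> (y \<in> C (TT k) \<and> SS (Suc k) = insert y (TT k) \<and> to_nat_on VT y \<le> to_nat_on VT x)"
        proof (cases "k \<ge> m")
          case True
          have "a \<in> TT k" using mono_st[OF True] am sf3[of k] by blast
          moreover have "x \<notin> TT k" using nx sf4[of k] by blast
          ultimately have "x \<in> C (TT k)" using xV step(2) by (auto simp: C_def)
          then show ?thesis using sf5[of k] by blast
        qed simp
      qed
      then obtain Y where Y: "\<And>k. k \<ge> m \<Longrightarrow> Y k \<in> C (TT k) \<and> SS (Suc k) = insert (Y k) (TT k) \<and> to_nat_on VT (Y k) \<le> to_nat_on VT x"
        by metis
      have inj: "inj_on Y {m..}"
      proof (rule linorder_inj_onI)
        fix k k' assume kk: "k < k'" "k \<in> {m..}" "k' \<in> {m..}"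
        have "Y k \<in> SS (Suc k)" using Y kk by auto
        moreover have "SS (Suc k) \<subseteq> TT k'" using mono_st[of "Suc k" k'] kk sf3[of k'] by auto
        moreover have "Y k' \<notin> TT k'" using Y[of k'] kk by (auto simp: C_def)
        ultimately show "Y k \<noteq> Y k'" by auto
      qed auto
      define B where "B = {z\<in>VT. to_nat_on VT z \<le> to_nat_on VT x}"
      have "inj_on (to_nat_on VT) B" using cT inj_on_to_nat_on by (auto simp: B_def inj_on_def)
      moreover have "to_nat_on VT ` B \<subseteq> {..to_nat_on VT x}" by (auto simp: B_def)
      ultimately have "finite B" by (meson finite_atMost finite_imageD finite_subset)
      moreover have "Y ` {m..} \<subseteq> B" using Y by (auto simp: B_def C_def)
      ultimately have "finite (Y ` {m..})" by (rule finite_subset[rotated])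
      then have "finite {m..}" using inj finite_imageD by blast
      then show False using infinite_Ici by blast
    qed
  qed
qed

definition F where "F x = ff (LEAST n. x \<in> SS n) x"

lemma F_eq: assumes "x \<in> SS n" shows "F x = ff n x"
proof -
  let ?l = "LEAST n. x \<in> SS n"
  have "?l \<le> n" "x \<in> SS ?l" using assms by (auto intro: Least_le LeastI)
  then show ?thesis using mono_st[of ?l n] by (simp add: F_def)
qed

lemma both: assumes "x \<in> VT" "y \<in> VT" obtains n where "x \<in> SS n" "y \<in> SS n"
proof -
  obtain n1 n2 where "x \<in> SS n1" "y \<in> SS n2" using reach assms by blast
  then show ?thesis using mono_st[of n1 "max n1 n2"] mono_st[of n2 "max n1 n2"] that by auto
qed

lemma result: "subgraph_embedding VT ET VH EH F \<and> neighbors VH EH v \<subseteq> F ` VT"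
proof -
  have "inj_on F VT"
  proof (rule inj_onI)
    fix x y assume xy: "x \<in> VT" "y \<in> VT" "F x = F y"
    obtain n where n: "x \<in> SS n" "y \<in> SS n" using both xy(1,2) by blast
    then show "x = y" using xy(3) good_st[of n] F_eq[OF n(1)] F_eq[OF n(2)]
      by (auto simp: good_def inj_on_def)
  qed
  moreover have "F ` VT \<subseteq> VH"
  proof
    fix z assume "z \<in> F ` VT"
    then obtain x where x: "x \<in> VT" "z = F x" by blast
    obtain n where "x \<in> SS n" using reach x by blast
    then show "z \<in> VH" using good_st[of n] F_eq x by (auto simp: good_def)
  qed
  moreover have "\<forall>x\<in>VT. \<forall>y\<in>VT. ET x y \<longrightarrow> EH (F x) (F y)"
  proof (intro ballI impI)
    fix x y assume xy: "x \<in> VT" "y \<in> VT" "ET x y"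
    obtain n where n: "x \<in> SS n" "y \<in> SS n" using both xy(1,2) by blast
    then show "EH (F x) (F y)" using xy(3) good_st[of n] F_eq[OF n(1)] F_eq[OF n(2)]
      by (auto simp: good_def)
  qed
  moreover have "neighbors VH EH v \<subseteq> F ` VT"
  proof
    fix u assume u: "u \<in> neighbors VH EH v"
    have "NV \<subseteq> VH" by (auto simp: NV_def neighbors_def)
    then have "countable NV" by (rule countable_subset[OF _ cH])
    moreover have "u \<in> NV" using u by (simp add: NV_def)
    ultimately obtain n where "from_nat_into NV n = u" by (blast dest: from_nat_into_surj)
    then have "u \<in> gg n ` TT n" using sf6[of n] by simp
    then obtain a where a: "a \<in> TT n" "u = gg n a" by blast
    have sa: "a \<in> SS (Suc n)" "ff (Suc n) a = gg n a" using sf4[of n] sf7[of a n] a(1) by auto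
    then have "a \<in> SS (Suc n)" "F a = u" using F_eq[OF sa(1)] a(2) by simp_all
    moreover have "a \<in> VT" using good_st[of "Suc n"] \<open>a \<in> SS (Suc n)\<close> by (auto simp: good_def)
    ultimately show "u \<in> F ` VT" by blast
  qed
  ultimately show ?thesis unfolding subgraph_embedding_def by blast
qed

end

theorem mainTheorem13:
  fixes VT :: "'b set" and ET :: "'b \<Rightarrow> 'b \<Rightarrow> bool"
    and VH :: "'a set" and EH :: "'a \<Rightarrow> 'a \<Rightarrow> bool"
  assumes "tree VT ET" and "countable VT"
    and "\<exists>t\<in>VT. infinite_degree VT ET t"
    and "graph VH EH" and "countable VH"
    and "\<forall>w\<in>VH. infinite_degree VH EH w"
    and "v \<in> VH"
  shows "\<exists>f. subgraph_embedding VT ET VH EH f \<and> neighbors VH EH v \<subseteq> f ` VT"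
proof -
  obtain t where "t \<in> VT" "infinite_degree VT ET t" using assms(3) by blast
  then interpret emb VT ET VH EH v t using assms by (unfold_locales) simp_all
  show ?thesis using result by blast
qed

end
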